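(* Let $G$ be a TDLC-group of type $\mathrm{FP}_{n+1}$, and let $(\mathbb{Q}[\Omega_i],\partial_i)$ and $(\mathbb{Q}[\Lambda_i],\delta_i)$ be two partial proper permutation resolutions of $\mathbb{Q}$ of finite type in degrees $0,\dots,n+1$. Then $G$ satisfies the weak $n$-dimensional linear isoperimetric inequality with respect to $(\mathbb{Q}[\Lambda_i],\delta_i)$ if and only if it does with respect to $(\mathbb{Q}[\Omega_i],\partial_i)$.
   Context: A TDLC-group is a totally disconnected locally compact Hausdorff topological group. A discrete $\mathbb{Q}[G]$-module is a left $\mathbb{Q}[G]$-module in which every element has open stabilizer. A $G$-set $\Omega$ is proper if all point stabilizers are compact open; $\mathbb{Q}[\Omega]$ is then a proper permutation module (projective among discrete modules), finitely generated iff $\Omega/G$ is finite, with $\ell_1$-norm $\|\sum a_\omega\omega\|_1=\sum|a_\omega|$. A partial proper permutation resolution of finite type in degrees $0,\dots,n+1$ is an exact sequence $\mathbb{Q}[\Omega_{n+1}]\xrightarrow{\partial_{n+1}}\mathbb{Q}[\Omega_n]\xrightarrow{\partial_n}\cdots\to\mathbb{Q}[\Omega_0]\to\mathbb{Q}\to0$ of discrete modules with each $\Omega_i$ a proper $G$-set with finitely many orbits; $G$ has type $\mathrm{FP}_{n+1}$ if one exists. $G$ satisfies the weak $n$-dimensional linear isoperimetric inequality with respect to such a resolution if there is $C>0$ with $\inf\{\|y\|_1: y\in\mathbb{Q}[\Omega_{n+1}],\ \partial_{n+1}(y)=x\}\le C\|x\|_1$ for all $x\in\ker\partial_n$. *)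

theory Defs
  imports "HOL-Analysis.Analysis" "HOL-Algebra.Group_Action"
begin

definition topological_group :: "('g, 'm) monoid_scheme \<Rightarrow> 'g topology \<Rightarrow> bool" where
  "topological_group G T \<longleftrightarrow> group G \<and> topspace T = carrier G \<and>
     continuous_map (prod_topology T T) T (\<lambda>p. fst p \<otimes>\<^bsub>G\<^esub> snd p) \<and>
     continuous_map T T (\<lambda>x. inv\<^bsub>G\<^esub> x)"

definition totally_disconnected_space :: "'a topology \<Rightarrow> bool" where
  "totally_disconnected_space T \<longleftrightarrow> (\<forall>S. connectedin T S \<longrightarrow> (\<exists>a. S \<subseteq> {a}))"

definition TDLC_group :: "('g, 'm) monoid_scheme \<Rightarrow> 'g topology \<Rightarrow> bool" where
  "TDLC_group G T \<longleftrightarrow> topological_group G T \<and> Hausdorff_space T \<and>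
     locally_compact_space T \<and> totally_disconnected_space T"

definition proper_G_set :: "('g, 'm) monoid_scheme \<Rightarrow> 'g topology \<Rightarrow> 'w set \<Rightarrow> ('g \<Rightarrow> 'w \<Rightarrow> 'w) \<Rightarrow> bool" where
  "proper_G_set G T Om act \<longleftrightarrow> group_action G Om act \<and>
     (\<forall>w\<in>Om. openin T (stabilizer G act w) \<and> compactin T (stabilizer G act w))"

definition perm_module :: "'w set \<Rightarrow> ('w \<Rightarrow> rat) set" where
  "perm_module Om = {x. finite {w. x w \<noteq> 0} \<and> {w. x w \<noteq> 0} \<subseteq> Om}"

definition perm_act :: "('g, 'm) monoid_scheme \<Rightarrow> 'w set \<Rightarrow> ('g \<Rightarrow> 'w \<Rightarrow> 'w) \<Rightarrow> 'g \<Rightarrow> ('w \<Rightarrow> rat) \<Rightarrow> ('w \<Rightarrow> rat)" where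
  "perm_act G Om act g x = (\<lambda>w. if w \<in> Om then x (act (inv\<^bsub>G\<^esub> g) w) else 0)"

definition l1_norm :: "('w \<Rightarrow> rat) \<Rightarrow> real" where
  "l1_norm x = (\<Sum>w\<in>{w. x w \<noteq> 0}. \<bar>real_of_rat (x w)\<bar>)"

definition perm_hom :: "('g, 'm) monoid_scheme \<Rightarrow> 'v set \<Rightarrow> ('g \<Rightarrow> 'v \<Rightarrow> 'v) \<Rightarrow> 'w set \<Rightarrow> ('g \<Rightarrow> 'w \<Rightarrow> 'w)
     \<Rightarrow> (('v \<Rightarrow> rat) \<Rightarrow> ('w \<Rightarrow> rat)) \<Rightarrow> bool" where
  "perm_hom G Om1 act1 Om2 act2 f \<longleftrightarrow>
     (\<forall>x\<in>perm_module Om1. f x \<in> perm_module Om2) \<and>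
     (\<forall>x\<in>perm_module Om1. \<forall>y\<in>perm_module Om1. f (\<lambda>w. x w + y w) = (\<lambda>w. f x w + f y w)) \<and>
     (\<forall>c. \<forall>x\<in>perm_module Om1. f (\<lambda>w. c * x w) = (\<lambda>w. c * f x w)) \<and>
     (\<forall>g\<in>carrier G. \<forall>x\<in>perm_module Om1. f (perm_act G Om1 act1 g x) = perm_act G Om2 act2 g (f x))"

definition aug_hom :: "('g, 'm) monoid_scheme \<Rightarrow> 'v set \<Rightarrow> ('g \<Rightarrow> 'v \<Rightarrow> 'v) \<Rightarrow> (('v \<Rightarrow> rat) \<Rightarrow> rat) \<Rightarrow> bool" where
  "aug_hom G Om act eps \<longleftrightarrow>
     (\<forall>x\<in>perm_module Om. \<forall>y\<in>perm_module Om. eps (\<lambda>w. x w + y w) = eps x + eps y) \<and>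
     (\<forall>c. \<forall>x\<in>perm_module Om. eps (\<lambda>w. c * x w) = c * eps x) \<and>
     (\<forall>g\<in>carrier G. \<forall>x\<in>perm_module Om. eps (perm_act G Om act g x) = eps x)"

text \<open>A partial proper permutation resolution of finite type in degrees 0..n+1:
  Q[Om (n+1)] --d (n+1)--> Q[Om n] --> ... --d 1--> Q[Om 0] --eps--> Q --> 0,
  where d i : Q[Om i] \<rightarrow> Q[Om (i-1)] for 1 \<le> i \<le> n+1, each Om i a proper G-set (with action act i)
  with finitely many orbits, and the sequence is exact.\<close>
definition partial_ppr :: "('g, 'm) monoid_scheme \<Rightarrow> 'g topology \<Rightarrow> nat \<Rightarrow> (nat \<Rightarrow> 'w set) \<Rightarrow>
    (nat \<Rightarrow> 'g \<Rightarrow> 'w \<Rightarrow> 'w) \<Rightarrow> (nat \<Rightarrow> ('w \<Rightarrow> rat) \<Rightarrow> ('w \<Rightarrow> rat)) \<Rightarrow> (('w \<Rightarrow> rat) \<Rightarrow> rat) \<Rightarrow> bool" where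
  "partial_ppr G T n Om act d eps \<longleftrightarrow>
     (\<forall>i\<le>Suc n. proper_G_set G T (Om i) (act i) \<and> finite (orbits G (Om i) (act i))) \<and>
     (\<forall>i\<in>{1..Suc n}. perm_hom G (Om i) (act i) (Om (i - 1)) (act (i - 1)) (d i)) \<and>
     aug_hom G (Om 0) (act 0) eps \<and>
     eps ` perm_module (Om 0) = UNIV \<and>
     {x\<in>perm_module (Om 0). eps x = 0} = d 1 ` perm_module (Om 1) \<and>
     (\<forall>i\<in>{1..n}. {x\<in>perm_module (Om i). d i x = (\<lambda>_. 0)} = d (Suc i) ` perm_module (Om (Suc i)))"

definition ppr_kernel :: "nat \<Rightarrow> (nat \<Rightarrow> 'w set) \<Rightarrow> (nat \<Rightarrow> ('w \<Rightarrow> rat) \<Rightarrow> ('w \<Rightarrow> rat)) \<Rightarrow>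
    (('w \<Rightarrow> rat) \<Rightarrow> rat) \<Rightarrow> ('w \<Rightarrow> rat) set" where
  "ppr_kernel i Om d eps = (if i = 0 then {x\<in>perm_module (Om 0). eps x = 0}
                            else {x\<in>perm_module (Om i). d i x = (\<lambda>_. 0)})"

definition weak_linear_isoperimetric :: "nat \<Rightarrow> (nat \<Rightarrow> 'w set) \<Rightarrow> (nat \<Rightarrow> ('w \<Rightarrow> rat) \<Rightarrow> ('w \<Rightarrow> rat)) \<Rightarrow>
    (('w \<Rightarrow> rat) \<Rightarrow> rat) \<Rightarrow> bool" where
  "weak_linear_isoperimetric n Om d eps \<longleftrightarrow>
     (\<exists>C>0. \<forall>x\<in>ppr_kernel n Om d eps.
        (INF y\<in>{y\<in>perm_module (Om (Suc n)). d (Suc n) y = x}. l1_norm y) \<le> C * l1_norm x)"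

end

theory Submission
  imports Defs
begin

abbreviation PM where "PM \<equiv> perm_module"

definition dlt :: "'w \<Rightarrow> 'w \<Rightarrow> rat" where "dlt w = (\<lambda>v. if v = w then 1 else 0)"

lemma PM_iff: "x \<in> PM E \<longleftrightarrow> finite {w. x w \<noteq> 0} \<and> (\<forall>w. w \<notin> E \<longrightarrow> x w = 0)"
  unfolding perm_module_def by auto

lemma PM_zero[simp]: "(\<lambda>_. 0) \<in> PM E"
  unfolding PM_iff by auto

lemma PM_add: "x \<in> PM E \<Longrightarrow> y \<in> PM E \<Longrightarrow> (\<lambda>w. x w + y w) \<in> PM E"
  unfolding PM_iff by (auto intro: finite_subset[of _ "{w. x w \<noteq> 0} \<union> {w. y w \<noteq> 0}"])

lemma PM_scale: "x \<in> PM E \<Longrightarrow> (\<lambda>w. c * x w) \<in> PM E"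
  unfolding PM_iff by (auto intro: finite_subset[of _ "{w. x w \<noteq> 0}"])

lemma PM_diff: "x \<in> PM E \<Longrightarrow> y \<in> PM E \<Longrightarrow> (\<lambda>w. x w - y w) \<in> PM E"
  unfolding PM_iff by (auto intro: finite_subset[of _ "{w. x w \<noteq> 0} \<union> {w. y w \<noteq> 0}"])

lemma PM_sum: "finite S \<Longrightarrow> (\<And>i. i \<in> S \<Longrightarrow> F i \<in> PM E) \<Longrightarrow> (\<lambda>v. \<Sum>i\<in>S. c i * F i v) \<in> PM E"
proof (induction S rule: finite_induct)
  case empty then show ?case by simp
next
  case (insert a S)
  have "(\<lambda>v. c a * F a v + (\<Sum>i\<in>S. c i * F i v)) \<in> PM E"
    using insert by (intro PM_add PM_scale) auto
  then show ?case using insert by simp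
qed

lemma PM_dlt: "w \<in> E \<Longrightarrow> dlt w \<in> PM E"
  unfolding PM_iff dlt_def by auto

lemma PM_decomp: "x \<in> PM E \<Longrightarrow> x = (\<lambda>v. \<Sum>w\<in>{w. x w \<noteq> 0}. x w * dlt w v)"
proof
  fix v assume x: "x \<in> PM E"
  have "(\<Sum>w\<in>{w. x w \<noteq> 0}. x w * dlt w v) = (\<Sum>w\<in>{w. x w \<noteq> 0}. if w = v then x w else 0)"
    by (rule sum.cong) (auto simp: dlt_def)
  also have "\<dots> = x v" using x unfolding PM_iff by (auto simp: sum.delta)
  finally show "x v = (\<Sum>w\<in>{w. x w \<noteq> 0}. x w * dlt w v)" by simp
qed

lemma perm_act_sum: "perm_act G E act g (\<lambda>v. \<Sum>i\<in>S. c i * F i v) = (\<lambda>v. \<Sum>i\<in>S. c i * perm_act G E act g (F i) v)"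
  unfolding perm_act_def by auto

lemma perm_act_add: "perm_act G E act g (\<lambda>v. x v + y v) = (\<lambda>v. perm_act G E act g x v + perm_act G E act g y v)"
  unfolding perm_act_def by auto

lemma perm_act_scale: "perm_act G E act g (\<lambda>v. c * x v) = (\<lambda>v. c * perm_act G E act g x v)"
  unfolding perm_act_def by auto

lemma perm_act_diff: "perm_act G E act g (\<lambda>v. x v - y v) = (\<lambda>v. perm_act G E act g x v - perm_act G E act g y v)"
  unfolding perm_act_def by auto

lemma (in group_action) grp: "group G"
  using group_hom group_hom.axioms(1) by auto

lemma (in group_action) act_inv_eq:
  assumes "g \<in> carrier G" "x \<in> E" "y \<in> E"
  shows "\<phi> (inv g) y = x \<longleftrightarrow> y = \<phi> g x"
proof -
  interpret group G by (rule grp)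
  show ?thesis
    using assms orbit_sym_aux[of g x] orbit_sym_aux[of "inv g" y] by (auto simp: inv_inv)
qed

lemma (in group_action) act_closed: "g \<in> carrier G \<Longrightarrow> x \<in> E \<Longrightarrow> \<phi> g x \<in> E"
  using element_image by blast

lemma (in group_action) PM_perm_act:
  assumes "g \<in> carrier G" "x \<in> PM E"
  shows "perm_act G E \<phi> g x \<in> PM E"
proof -
  interpret group G by (rule grp)
  have "{w. perm_act G E \<phi> g x w \<noteq> 0} \<subseteq> \<phi> g ` {w. x w \<noteq> 0}"
  proof
    fix w assume "w \<in> {w. perm_act G E \<phi> g x w \<noteq> 0}"
    then have w: "w \<in> E" "x (\<phi> (inv g) w) \<noteq> 0" by (auto simp: perm_act_def split: if_splits)
    then have "\<phi> (inv g) w \<in> E" using assms by (auto intro: act_closed)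
    then show "w \<in> \<phi> g ` {w. x w \<noteq> 0}" using w assms act_inv_eq by blast
  qed
  moreover have "finite {w. x w \<noteq> 0}" using assms(2) unfolding PM_iff by auto
  ultimately have "finite {w. perm_act G E \<phi> g x w \<noteq> 0}" by (meson finite_imageI finite_subset)
  then show ?thesis unfolding PM_iff by (auto simp: perm_act_def)
qed

lemma (in group_action) perm_act_dlt:
  assumes "g \<in> carrier G" "w \<in> E"
  shows "perm_act G E \<phi> g (dlt w) = dlt (\<phi> g w)"
proof -
  interpret group G by (rule grp)
  show ?thesis unfolding perm_act_def dlt_def
    using assms act_inv_eq act_closed by fastforce
qed

lemma (in group_action) perm_act_mult:
  assumes "a \<in> carrier G" "b \<in> carrier G"
  shows "perm_act G E \<phi> (a \<otimes> b) y = perm_act G E \<phi> a (perm_act G E \<phi> b y)"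
proof -
  interpret group G by (rule grp)
  have "\<phi> (inv (a \<otimes> b)) w = \<phi> (inv b) (\<phi> (inv a) w)" if "w \<in> E" for w
    using assms that by (simp add: inv_mult_group composition_rule)
  then show ?thesis unfolding perm_act_def using assms act_closed by (auto intro!: ext)
qed

lemma (in group_action) perm_act_one:
  assumes "y \<in> PM E"
  shows "perm_act G E \<phi> \<one> y = y"
proof -
  interpret group G by (rule grp)
  have "\<phi> \<one> w = w" if "w \<in> E" for w by (metis id_eq_one restrict_apply' that)
  then show ?thesis using assms unfolding perm_act_def PM_iff by auto
qed

lemma l1_superset:
  assumes "finite S" "{w. x w \<noteq> 0} \<subseteq> S"
  shows "l1_norm x = (\<Sum>w\<in>S. \<bar>real_of_rat (x w)\<bar>)"
  unfolding l1_norm_def using assms by (intro sum.mono_neutral_left) auto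

lemma l1_nonneg: "l1_norm x \<ge> 0"
  unfolding l1_norm_def by (simp add: sum_nonneg)

lemma l1_add_le:
  assumes "finite {w. x w \<noteq> 0}" "finite {w. y w \<noteq> 0}"
  shows "l1_norm (\<lambda>w. x w + y w) \<le> l1_norm x + l1_norm y"
proof -
  let ?S = "{w. x w \<noteq> 0} \<union> {w. y w \<noteq> 0}"
  have "l1_norm (\<lambda>w. x w + y w) = (\<Sum>w\<in>?S. \<bar>real_of_rat (x w + y w)\<bar>)"
    using assms by (intro l1_superset) auto
  also have "\<dots> \<le> (\<Sum>w\<in>?S. \<bar>real_of_rat (x w)\<bar> + \<bar>real_of_rat (y w)\<bar>)"
    by (intro sum_mono) (metis abs_triangle_ineq of_rat_add)
  also have "\<dots> = l1_norm x + l1_norm y"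
    using assms by (simp add: sum.distrib l1_superset[of ?S])
  finally show ?thesis .
qed

lemma l1_scale:
  assumes "finite {w. x w \<noteq> 0}"
  shows "l1_norm (\<lambda>w. c * x w) = \<bar>real_of_rat c\<bar> * l1_norm x"
proof -
  have "l1_norm (\<lambda>w. c * x w) = (\<Sum>w\<in>{w. x w \<noteq> 0}. \<bar>real_of_rat (c * x w)\<bar>)"
    using assms by (intro l1_superset) auto
  also have "\<dots> = \<bar>real_of_rat c\<bar> * l1_norm x"
    by (simp add: l1_norm_def sum_distrib_left of_rat_mult abs_mult)
  finally show ?thesis .
qed

lemma l1_sum_le:
  assumes "finite S" "\<And>i. i \<in> S \<Longrightarrow> F i \<in> PM E"
  shows "l1_norm (\<lambda>v. \<Sum>i\<in>S. c i * F i v) \<le> (\<Sum>i\<in>S. \<bar>real_of_rat (c i)\<bar> * l1_norm (F i))"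
  using assms
proof (induction S rule: finite_induct)
  case empty then show ?case by (simp add: l1_norm_def)
next
  case (insert a S)
  have f1: "finite {w. c a * F a w \<noteq> 0}"
    using PM_scale[OF insert.prems[of a]] insert by (auto simp: PM_iff)
  have f2: "finite {w. (\<Sum>i\<in>S. c i * F i w) \<noteq> 0}"
    using PM_sum[OF insert(1), of F E c] insert by (auto simp: PM_iff)
  have "l1_norm (\<lambda>v. \<Sum>i\<in>insert a S. c i * F i v) = l1_norm (\<lambda>v. c a * F a v + (\<Sum>i\<in>S. c i * F i v))"
    using insert by simp
  also have "\<dots> \<le> l1_norm (\<lambda>v. c a * F a v) + l1_norm (\<lambda>v. \<Sum>i\<in>S. c i * F i v)"
    using l1_add_le[OF f1 f2] .
  also have "\<dots> \<le> \<bar>real_of_rat (c a)\<bar> * l1_norm (F a) + (\<Sum>i\<in>S. \<bar>real_of_rat (c i)\<bar> * l1_norm (F i))"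
    using insert l1_scale[of "F a" "c a"] by (auto simp: PM_iff)
  finally show ?case using insert by simp
qed

lemma (in group_action) l1_perm_act:
  assumes "g \<in> carrier G" "y \<in> PM E"
  shows "l1_norm (perm_act G E \<phi> g y) = l1_norm y"
proof -
  interpret group G by (rule grp)
  let ?S = "{w. y w \<noteq> 0}"
  have SE: "?S \<subseteq> E" using assms(2) unfolding PM_iff by auto
  have fin: "finite ?S" using assms(2) unfolding PM_iff by auto
  have val: "perm_act G E \<phi> g y (\<phi> g w) = y w" if "w \<in> E" for w
    using that assms act_closed orbit_sym_aux by (simp add: perm_act_def)
  have "{w. perm_act G E \<phi> g y w \<noteq> 0} \<subseteq> \<phi> g ` ?S"
  proof
    fix w assume "w \<in> {w. perm_act G E \<phi> g y w \<noteq> 0}"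
    then have w: "w \<in> E" "y (\<phi> (inv g) w) \<noteq> 0" by (auto simp: perm_act_def split: if_splits)
    then have "\<phi> (inv g) w \<in> E" using assms by (auto intro: act_closed)
    then show "w \<in> \<phi> g ` ?S" using w assms act_inv_eq by blast
  qed
  then have "l1_norm (perm_act G E \<phi> g y) = (\<Sum>w\<in>\<phi> g ` ?S. \<bar>real_of_rat (perm_act G E \<phi> g y w)\<bar>)"
    using fin by (intro l1_superset) auto
  also have "\<dots> = (\<Sum>w\<in>?S. \<bar>real_of_rat (perm_act G E \<phi> g y (\<phi> g w))\<bar>)"
    using inj_on_subset[OF inj_prop[OF assms(1)] SE] by (simp add: sum.reindex)
  also have "\<dots> = l1_norm y" unfolding l1_norm_def using SE val by (intro sum.cong) auto
  finally show ?thesis .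
qed

lemma hom_closed: "perm_hom G E1 a1 E2 a2 f \<Longrightarrow> x \<in> PM E1 \<Longrightarrow> f x \<in> PM E2"
  unfolding perm_hom_def by auto

lemma hom_add: "perm_hom G E1 a1 E2 a2 f \<Longrightarrow> x \<in> PM E1 \<Longrightarrow> y \<in> PM E1 \<Longrightarrow> f (\<lambda>w. x w + y w) = (\<lambda>w. f x w + f y w)"
  unfolding perm_hom_def by auto

lemma hom_scale: "perm_hom G E1 a1 E2 a2 f \<Longrightarrow> x \<in> PM E1 \<Longrightarrow> f (\<lambda>w. c * x w) = (\<lambda>w. c * f x w)"
  unfolding perm_hom_def by auto

lemma hom_equiv: "perm_hom G E1 a1 E2 a2 f \<Longrightarrow> g \<in> carrier G \<Longrightarrow> x \<in> PM E1 \<Longrightarrow> f (perm_act G E1 a1 g x) = perm_act G E2 a2 g (f x)"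
  unfolding perm_hom_def by auto

lemma hom_zero: "perm_hom G E1 a1 E2 a2 f \<Longrightarrow> f (\<lambda>_. 0) = (\<lambda>_. 0)"
  using hom_scale[of G E1 a1 E2 a2 f "\<lambda>_. 0" 0] by simp

lemma hom_diff: "perm_hom G E1 a1 E2 a2 f \<Longrightarrow> x \<in> PM E1 \<Longrightarrow> y \<in> PM E1 \<Longrightarrow> f (\<lambda>w. x w - y w) = (\<lambda>w. f x w - f y w)"
proof -
  assume h: "perm_hom G E1 a1 E2 a2 f" and x: "x \<in> PM E1" and y: "y \<in> PM E1"
  have e0: "(\<lambda>w. x w - y w) = (\<lambda>w. x w + (-1) * y w)" by simp
  have e1: "f (\<lambda>w. x w + (-1) * y w) = (\<lambda>w. f x w + f (\<lambda>w. (-1) * y w) w)"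
    by (rule hom_add[OF h x PM_scale[OF y]])
  have e2: "f (\<lambda>w. (-1) * y w) = (\<lambda>w. (-1) * f y w)" by (rule hom_scale[OF h y])
  show ?thesis unfolding e0 e1 e2 by simp
qed

lemma hom_sum:
  assumes h: "perm_hom G E1 a1 E2 a2 f" and "finite S" "\<And>i. i \<in> S \<Longrightarrow> F i \<in> PM E1"
  shows "f (\<lambda>v. \<Sum>i\<in>S. c i * F i v) = (\<lambda>u. \<Sum>i\<in>S. c i * f (F i) u)"
  using assms(2,3)
proof (induction S rule: finite_induct)
  case empty then show ?case using hom_zero[OF h] by simp
next
  case (insert a S)
  have "f (\<lambda>v. \<Sum>i\<in>insert a S. c i * F i v) = f (\<lambda>v. c a * F a v + (\<Sum>i\<in>S. c i * F i v))"
    using insert by simp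
  also have "\<dots> = (\<lambda>u. f (\<lambda>v. c a * F a v) u + f (\<lambda>v. \<Sum>i\<in>S. c i * F i v) u)"
    using insert by (intro hom_add[OF h] PM_scale PM_sum) auto
  also have "\<dots> = (\<lambda>u. \<Sum>i\<in>insert a S. c i * f (F i) u)"
    using insert hom_scale[OF h] by simp
  finally show ?case .
qed

lemma hom_comp: "perm_hom G E1 a1 E2 a2 f \<Longrightarrow> perm_hom G E2 a2 E3 a3 g \<Longrightarrow> perm_hom G E1 a1 E3 a3 (\<lambda>x. g (f x))"
  unfolding perm_hom_def by (auto simp: PM_add PM_scale)

lemma hom_id: "perm_hom G E a E a (\<lambda>x. x)"
  unfolding perm_hom_def by auto

lemma hom_minus: "perm_hom G E1 a1 E2 a2 f \<Longrightarrow> perm_hom G E1 a1 E2 a2 g \<Longrightarrow> perm_hom G E1 a1 E2 a2 (\<lambda>x w. f x w - g x w)"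
  unfolding perm_hom_def by (auto simp: PM_diff perm_act_diff algebra_simps)

lemma hom_bound:
  assumes ga: "group_action G E act" and fin: "finite (orbits G E act)"
    and ga2: "group_action G E2 act2" and h: "perm_hom G E act E2 act2 f"
  shows "\<exists>B\<ge>0. \<forall>x\<in>PM E. l1_norm (f x) \<le> B * l1_norm x"
proof -
  interpret A: group_action G E act by (rule ga)
  interpret A2: group_action G E2 act2 by (rule ga2)
  define N where "N w = l1_norm (f (dlt w))" for w
  have inv: "N (act g w) = N w" if "w \<in> E" "g \<in> carrier G" for g w
  proof -
    have "f (dlt (act g w)) = perm_act G E2 act2 g (f (dlt w))"
      using that A.perm_act_dlt[symmetric] hom_equiv[OF h] PM_dlt by metis
    then show ?thesis unfolding N_def
      using A2.l1_perm_act that hom_closed[OF h PM_dlt] by simp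
  qed
  have sub: "N ` E \<subseteq> (\<lambda>Q. N (SOME w. w \<in> Q)) ` orbits G E act"
  proof
    fix y assume "y \<in> N ` E"
    then obtain w where w: "w \<in> E" "y = N w" by auto
    let ?O = "orbit G act w"
    have "w \<in> ?O" using A.orbit_refl w by auto
    then have "(SOME w. w \<in> ?O) \<in> ?O" by (rule someI)
    then obtain g where "g \<in> carrier G" "(SOME w. w \<in> ?O) = act g w" unfolding orbit_def by auto
    then have "N (SOME w. w \<in> ?O) = y" using inv w by simp
    moreover have "?O \<in> orbits G E act" using w unfolding orbits_def by auto
    ultimately show "y \<in> (\<lambda>Q. N (SOME w. w \<in> Q)) ` orbits G E act" by force
  qed
  have finN: "finite (N ` E)" using finite_subset[OF sub finite_imageI[OF fin]] .
  define B where "B = Max (insert 0 (N ` E))"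
  have B0: "B \<ge> 0" unfolding B_def using finN by simp
  have NB: "N w \<le> B" if "w \<in> E" for w unfolding B_def using finN that by simp
  have "l1_norm (f x) \<le> B * l1_norm x" if x: "x \<in> PM E" for x
  proof -
    let ?S = "{w. x w \<noteq> 0}"
    have SE: "?S \<subseteq> E" and finS: "finite ?S" using x unfolding PM_iff by auto
    have "f x = f (\<lambda>v. \<Sum>w\<in>?S. x w * dlt w v)" using PM_decomp[OF x] by simp
    also have "\<dots> = (\<lambda>u. \<Sum>w\<in>?S. x w * f (dlt w) u)"
      using SE finS by (intro hom_sum[OF h]) (auto intro: PM_dlt)
    finally have fx: "f x = (\<lambda>u. \<Sum>w\<in>?S. x w * f (dlt w) u)" .
    have "l1_norm (f x) \<le> (\<Sum>w\<in>?S. \<bar>real_of_rat (x w)\<bar> * N w)"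
      unfolding fx N_def using finS SE by (intro l1_sum_le[where E=E2]) (auto intro: hom_closed[OF h] PM_dlt)
    also have "\<dots> \<le> (\<Sum>w\<in>?S. \<bar>real_of_rat (x w)\<bar> * B)"
      using SE NB by (intro sum_mono mult_left_mono) auto
    also have "\<dots> = B * l1_norm x" unfolding l1_norm_def by (simp add: sum_distrib_left mult.commute)
    finally show ?thesis .
  qed
  then show ?thesis using B0 by blast
qed

lemma left_mult_cont:
  fixes G :: "('g, 'm) monoid_scheme" (structure)
  assumes tg: "topological_group G T" and a: "a \<in> carrier G"
  shows "continuous_map T T (\<lambda>x. a \<otimes>\<^bsub>G\<^esub> x)"
proof -
  have ts: "topspace T = carrier G" and m: "continuous_map (prod_topology T T) T (\<lambda>p. fst p \<otimes>\<^bsub>G\<^esub> snd p)"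
    using tg unfolding topological_group_def by auto
  have "continuous_map T (prod_topology T T) (\<lambda>x. (a, x))"
    using a ts by (intro continuous_map_pairedI) (auto simp: continuous_map_id[unfolded id_def])
  from continuous_map_compose[OF this m] show ?thesis by (simp add: o_def)
qed

lemma coset_open:
  fixes G :: "('g, 'm) monoid_scheme" (structure)
  assumes tg: "topological_group G T" and U: "openin T U" "U \<subseteq> carrier G" and a: "a \<in> carrier G"
  shows "openin T ((l_coset G a U))"
proof -
  interpret group G using tg unfolding topological_group_def by auto
  have ts: "topspace T = carrier G" using tg unfolding topological_group_def by auto
  have 1: "(l_coset G a U) \<subseteq> {x \<in> topspace T. inv a \<otimes> x \<in> U}"
  proof
    fix x assume "x \<in> (l_coset G a U)"
    then obtain u where "u \<in> U" "x = a \<otimes> u" unfolding l_coset_def by auto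
    then show "x \<in> {x \<in> topspace T. inv a \<otimes> x \<in> U}" using a U ts by (auto simp: m_assoc[symmetric])
  qed
  have 2: "{x \<in> topspace T. inv a \<otimes> x \<in> U} \<subseteq> (l_coset G a U)"
  proof
    fix x assume "x \<in> {x \<in> topspace T. inv a \<otimes> x \<in> U}"
    then have x: "x \<in> carrier G" "inv a \<otimes> x \<in> U" using ts by auto
    then have "x = a \<otimes> (inv a \<otimes> x)" using a by (simp add: m_assoc[symmetric])
    then show "x \<in> (l_coset G a U)" using x unfolding l_coset_def by auto
  qed
  from 1 2 have "(l_coset G a U) = {x \<in> topspace T. inv a \<otimes> x \<in> U}" by (rule equalityI)
  then show ?thesis using openin_continuous_map_preimage[OF left_mult_cont[OF tg inv_closed[OF a]] U(1)] by simp
qed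

lemma finite_cosets:
  fixes G :: "('g, 'm) monoid_scheme" (structure)
  assumes tg: "topological_group G T" and U: "subgroup U G" "openin T U"
    and K: "K \<subseteq> carrier G" "compactin T K"
  shows "finite {(l_coset G k U) | k. k \<in> K}"
proof -
  interpret group G using tg unfolding topological_group_def by auto
  let ?C = "{(l_coset G k U) | k. k \<in> K}"
  have op: "\<forall>C\<in>?C. openin T C" using coset_open[OF tg U(2) subgroup.subset[OF U(1)]] K by auto
  have cov: "K \<subseteq> \<Union>?C"
  proof
    fix k assume k: "k \<in> K"
    then have "k \<in> (l_coset G k U)" unfolding l_coset_def using subgroup.one_closed[OF U(1)] K by force
    then show "k \<in> \<Union>?C" using k by blast
  qed
  obtain F where F: "finite F" "F \<subseteq> ?C" "K \<subseteq> \<Union>F"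
    using K(2) op cov unfolding compactin_def by meson
  have "?C \<subseteq> F"
  proof
    fix C assume "C \<in> ?C"
    then obtain k where k: "k \<in> K" "C = (l_coset G k U)" by auto
    then obtain D where D: "D \<in> F" "k \<in> D" using F by auto
    then obtain r where r: "r \<in> K" "D = (l_coset G r U)" using F by auto
    have "(l_coset G r U) = (l_coset G k U)" using l_repr_independence[of k r U] D r K U by auto
    then show "C \<in> F" using D r k by simp
  qed
  then show ?thesis using F(1) finite_subset by blast
qed

lemma (in group_action) perm_act_fix:
  assumes u: "u \<in> carrier G" and m: "m \<in> PM E" and fx: "\<forall>v. m v \<noteq> 0 \<longrightarrow> \<phi> u v = v"
  shows "perm_act G E \<phi> u m = m"
proof
  interpret group G by (rule grp)
  fix w
  show "perm_act G E \<phi> u m w = m w"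
  proof (cases "w \<in> E")
    case False then show ?thesis using m by (simp add: perm_act_def PM_iff)
  next
    case True
    have z: "\<phi> (inv u) w \<in> E" using True u act_closed by auto
    show ?thesis
    proof (cases "m w = 0")
      case False
      then have "\<phi> (inv u) w = w" using act_inv_eq[OF u True True] fx by auto
      then show ?thesis using True by (simp add: perm_act_def)
    next
      case zero: True
      have "m (\<phi> (inv u) w) = 0"
      proof (rule ccontr)
        assume nz: "m (\<phi> (inv u) w) \<noteq> 0"
        then have "\<phi> u (\<phi> (inv u) w) = \<phi> (inv u) w" using fx by auto
        moreover have "w = \<phi> u (\<phi> (inv u) w)" using act_inv_eq[OF u z True] by simp
        ultimately show False using nz zero by simp
      qed
      then show ?thesis using True zero by (simp add: perm_act_def)
    qed
  qed
qed

lemma averaging: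
  fixes G :: "('g, 'm) monoid_scheme" (structure)
  assumes tg: "topological_group G T" and ga: "group_action G L actL"
    and ostab: "\<forall>v\<in>L. openin T (stabilizer G actL v)"
    and K: "subgroup K G" "openin T K" "compactin T K" and m0: "m0 \<in> PM L"
  shows "\<exists>(I :: 'g set set) rep. finite I \<and> I \<noteq> {} \<and> (\<forall>C\<in>I. rep C \<in> K) \<and>
           (\<forall>k\<in>K. (\<lambda>v. \<Sum>C\<in>I. perm_act G L actL (k \<otimes>\<^bsub>G\<^esub> rep C) m0 v) = (\<lambda>v. \<Sum>C\<in>I. perm_act G L actL (rep C) m0 v))"
proof -
  interpret A: group_action G L actL by (rule ga)
  interpret group G by (rule A.grp)
  let ?S = "{v. m0 v \<noteq> 0}"
  have finS: "finite ?S" and SL: "?S \<subseteq> L" using m0 unfolding PM_iff by auto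
  have KG: "K \<subseteq> carrier G" using subgroup.subset[OF K(1)] .
  define U where "U = K \<inter> \<Inter>(stabilizer G actL ` ?S)"
  have Uopen: "openin T (K \<inter> \<Inter>(stabilizer G actL ` S))" if "finite S" "S \<subseteq> L" for S
    using that
  proof (induction S rule: finite_induct)
    case empty then show ?case using K(2) by simp
  next
    case (insert a S)
    have "K \<inter> \<Inter>(stabilizer G actL ` insert a S) = stabilizer G actL a \<inter> (K \<inter> \<Inter>(stabilizer G actL ` S))" by auto
    then show ?case using insert ostab by (auto intro: openin_Int)
  qed
  have Uo: "openin T U" unfolding U_def using Uopen[OF finS SL] .
  have Usub: "subgroup U G"
  proof -
    have "subgroup (\<Inter>(insert K (stabilizer G actL ` ?S))) G"
      using K(1) SL A.stabilizer_subgroup by (intro subgroups_Inter) auto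
    moreover have "\<Inter>(insert K (stabilizer G actL ` ?S)) = U" unfolding U_def by auto
    ultimately show ?thesis by simp
  qed
  have UK: "U \<subseteq> K" unfolding U_def by auto
  have Ufix: "perm_act G L actL u m0 = m0" if "u \<in> U" for u
  proof -
    have "u \<in> carrier G" using that UK KG by auto
    moreover have "\<forall>v. m0 v \<noteq> 0 \<longrightarrow> actL u v = v" using that unfolding U_def stabilizer_def by auto
    ultimately show ?thesis using A.perm_act_fix m0 by blast
  qed
  define I where "I = {(l_coset G k U) | k. k \<in> K}"
  define rep where "rep C = (SOME r. r \<in> C)" for C :: "'g set"
  have finI: "finite I" unfolding I_def using finite_cosets[OF tg Usub Uo KG K(3)] .
  have memI: "k \<in> (l_coset G k U)" if "k \<in> carrier G" for k
    unfolding l_coset_def using subgroup.one_closed[OF Usub] that by force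
  have Ine: "I \<noteq> {}" unfolding I_def using subgroup.one_closed[OF K(1)] by auto
  have repC: "rep C \<in> C" if "C \<in> I" for C
  proof -
    note th = that
    obtain k where "k \<in> K" "C = (l_coset G k U)" using th unfolding I_def by auto
    then have "k \<in> C" using memI KG by auto
    then show ?thesis unfolding rep_def by (rule someI)
  qed
  have cosK: "C \<subseteq> K" if "C \<in> I" for C
    using that UK K(1) unfolding I_def l_coset_def by (auto intro: subgroup.m_closed)
  have repK: "rep C \<in> K" if "C \<in> I" for C using repC cosK that by auto
  have indep: "perm_act G L actL c m0 = perm_act G L actL (rep C) m0" if "C \<in> I" "c \<in> C" for C c
  proof -
    note th = that
    obtain k where k: "k \<in> K" "C = (l_coset G k U)" using th(1) unfolding I_def by auto
    have "rep C \<in> (l_coset G k U)" using repC that k by simp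
    then have e: "(l_coset G (rep C) U) = C" using l_repr_independence[of "rep C" k U] k KG Usub by auto
    then obtain u where u: "u \<in> U" "c = rep C \<otimes> u" using th unfolding l_coset_def by auto
    have "rep C \<in> carrier G" using repK th KG by auto
    then show ?thesis using u Ufix A.perm_act_mult[of "rep C" u] UK KG by auto
  qed
  have "(\<lambda>v. \<Sum>C\<in>I. perm_act G L actL (k \<otimes> rep C) m0 v) = (\<lambda>v. \<Sum>C\<in>I. perm_act G L actL (rep C) m0 v)"
    if k: "k \<in> K" for k
  proof -
    have kG: "k \<in> carrier G" using k KG by auto
    have lk: "(l_coset G k C) \<in> I" if "C \<in> I" for C
    proof -
      note th = that
      obtain r where "r \<in> K" "C = (l_coset G r U)" using th unfolding I_def by auto
      then show ?thesis using lcos_m_assoc[of U k r] subgroup.subset[OF Usub] kG KG k K(1)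
        unfolding I_def by (auto intro: subgroup.m_closed)
    qed
    have bij: "bij_betw (\<lambda>C. l_coset G k C) I I"
    proof (rule bij_betw_imageI)
      show "inj_on (\<lambda>C. l_coset G k C) I"
      proof
        fix C D assume CD: "C \<in> I" "D \<in> I" "(l_coset G k C) = (l_coset G k D)"
        have "C = (l_coset G (inv k) ((l_coset G k C)))" using lcos_m_assoc[of C "inv k" k] cosK[OF CD(1)] KG kG
          by (auto simp: lcos_mult_one)
        also have "\<dots> = D" using lcos_m_assoc[of D "inv k" k] cosK[OF CD(2)] KG kG CD(3)
          by (auto simp: lcos_mult_one)
        finally show "C = D" .
      qed
      show "(\<lambda>C. l_coset G k C) ` I = I"
      proof
        show "(\<lambda>C. l_coset G k C) ` I \<subseteq> I" using lk by auto
        show "I \<subseteq> (\<lambda>C. l_coset G k C) ` I"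
        proof
          fix C assume C: "C \<in> I"
          obtain r where r: "r \<in> K" "C = (l_coset G r U)" using C unfolding I_def by auto
          have "inv k \<otimes> r \<in> K" using r k K(1) by (auto intro: subgroup.m_closed subgroup.m_inv_closed)
          then have D: "(l_coset G (inv k) C) \<in> I" using lcos_m_assoc[of U "inv k" r] r subgroup.subset[OF Usub] kG KG
            unfolding I_def by auto
          have "(l_coset G k ((l_coset G (inv k) C))) = C" using lcos_m_assoc[of C k "inv k"] cosK[OF C] KG kG
            by (auto simp: lcos_mult_one)
          then show "C \<in> (\<lambda>C. l_coset G k C) ` I" using D by force
        qed
      qed
    qed
    have step: "perm_act G L actL (k \<otimes> rep C) m0 = perm_act G L actL (rep ((l_coset G k C))) m0" if "C \<in> I" for C
    proof -
      have "k \<otimes> rep C \<in> (l_coset G k C)" using repC[OF that] unfolding l_coset_def by auto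
      then show ?thesis using indep lk that by blast
    qed
    have "(\<Sum>C\<in>I. perm_act G L actL (k \<otimes> rep C) m0 v) = (\<Sum>C\<in>I. perm_act G L actL (rep ((l_coset G k C))) m0 v)" for v
      using step by (intro sum.cong) auto
    also have "\<dots> v = (\<Sum>C\<in>I. perm_act G L actL (rep C) m0 v)" for v
      using sum.reindex_bij_betw[OF bij, of "\<lambda>C. perm_act G L actL (rep C) m0 v"] by simp
    finally show ?thesis by simp
  qed
  then show ?thesis using finI Ine repK by blast
qed

lemma (in group_action) perm_act_at:
  assumes "g \<in> carrier G" "w \<in> E"
  shows "perm_act G E \<phi> g y (\<phi> g w) = y w"
proof -
  interpret group G by (rule grp)
  show ?thesis using assms act_closed orbit_sym_aux by (simp add: perm_act_def)
qed

lemma (in group_action) supp_perm_act: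
  assumes "g \<in> carrier G"
  shows "{w. perm_act G E \<phi> g y w \<noteq> 0} \<subseteq> \<phi> g ` ({w. y w \<noteq> 0} \<inter> E)"
proof
  interpret group G by (rule grp)
  fix w assume "w \<in> {w. perm_act G E \<phi> g y w \<noteq> 0}"
  then have w: "w \<in> E" "y (\<phi> (inv g) w) \<noteq> 0" by (auto simp: perm_act_def split: if_splits)
  then have "\<phi> (inv g) w \<in> E" using assms by (auto intro: act_closed)
  then show "w \<in> \<phi> g ` ({w. y w \<noteq> 0} \<inter> E)" using w assms act_inv_eq by blast
qed

lemma sum_superset:
  assumes "finite S" "{w. x w \<noteq> 0} \<subseteq> S"
  shows "(\<lambda>v. \<Sum>w\<in>{w. x w \<noteq> 0}. x w * F w v) = (\<lambda>v. \<Sum>w\<in>S. x w * (F w v :: rat))"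
  using assms by (intro ext sum.mono_neutral_left) auto

lemma (in group_action) orbit_act:
  assumes "h \<in> carrier G" "w \<in> E"
  shows "orbit G \<phi> (\<phi> h w) = orbit G \<phi> w"
proof -
  interpret group G by (rule grp)
  show ?thesis
  proof (intro equalityI subsetI)
    fix x assume "x \<in> orbit G \<phi> (\<phi> h w)"
    then obtain g where "g \<in> carrier G" "x = \<phi> g (\<phi> h w)" unfolding orbit_def by auto
    then have "x = \<phi> (g \<otimes> h) w" using composition_rule assms by auto
    then show "x \<in> orbit G \<phi> w" using \<open>g \<in> carrier G\<close> assms unfolding orbit_def by auto
  next
    fix x assume "x \<in> orbit G \<phi> w"
    then obtain g where g: "g \<in> carrier G" "x = \<phi> g w" unfolding orbit_def by auto
    have "\<phi> (g \<otimes> inv h) (\<phi> h w) = \<phi> g (\<phi> (inv h) (\<phi> h w))"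
      using composition_rule assms g act_closed by auto
    also have "\<dots> = x" using orbit_sym_aux assms g by simp
    finally show "x \<in> orbit G \<phi> (\<phi> h w)" using g assms unfolding orbit_def
      by (auto intro!: exI[of _ "g \<otimes> inv h"])
  qed
qed

lemma exists_inv_lift:
  fixes G :: "('g, 'm) monoid_scheme" (structure)
  assumes tg: "topological_group G T"
    and psO: "proper_G_set G T E act" and psL: "proper_G_set G T L actL"
    and p: "perm_hom G L actL L2 act2 p" and f: "perm_hom G E act L2 act2 f"
    and img: "\<forall>x\<in>PM E. f x \<in> p ` PM L" and w0: "w0 \<in> E"
  shows "\<exists>m. m \<in> PM L \<and> p m = f (dlt w0) \<and> (\<forall>k\<in>stabilizer G act w0. perm_act G L actL k m = m)"
proof -
  interpret A: group_action G E act using psO unfolding proper_G_set_def by auto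
  interpret B: group_action G L actL using psL unfolding proper_G_set_def by auto
  interpret group G by (rule A.grp)
  obtain m0 where m0: "m0 \<in> PM L" "p m0 = f (dlt w0)" using img PM_dlt[OF w0] by force
  let ?K = "stabilizer G act w0"
  have K: "subgroup ?K G" "openin T ?K" "compactin T ?K"
    using A.stabilizer_subgroup[OF w0] psO w0 unfolding proper_G_set_def by auto
  have ostab: "\<forall>v\<in>L. openin T (stabilizer G actL v)" using psL unfolding proper_G_set_def by auto
  obtain I :: "'g set set" and rep where I: "finite I" "I \<noteq> {}" "\<forall>C\<in>I. rep C \<in> ?K"
    and inv: "\<forall>k\<in>?K. (\<lambda>v. \<Sum>C\<in>I. perm_act G L actL (k \<otimes> rep C) m0 v) = (\<lambda>v. \<Sum>C\<in>I. perm_act G L actL (rep C) m0 v)"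
    using averaging[OF tg B.group_action_axioms ostab K m0(1)] by blast
  have repG: "rep C \<in> carrier G" "act (rep C) w0 = w0" if "C \<in> I" for C
    using I that unfolding stabilizer_def by auto
  define N where "N = (of_nat (card I) :: rat)"
  have N0: "N \<noteq> 0" using I unfolding N_def by auto
  define m where "m = (\<lambda>v. \<Sum>C\<in>I. (1/N) * perm_act G L actL (rep C) m0 v)"
  have mPM: "m \<in> PM L" unfolding m_def using I repG m0 by (intro PM_sum B.PM_perm_act) auto
  have "p m = (\<lambda>u. \<Sum>C\<in>I. (1/N) * p (perm_act G L actL (rep C) m0) u)"
    unfolding m_def using I repG m0 by (intro hom_sum[OF p] B.PM_perm_act) auto
  also have "\<dots> = (\<lambda>u. \<Sum>C\<in>I. (1/N) * f (dlt w0) u)"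
  proof -
    have "p (perm_act G L actL (rep C) m0) = f (dlt w0)" if "C \<in> I" for C
    proof -
      have "p (perm_act G L actL (rep C) m0) = perm_act G L2 act2 (rep C) (f (dlt w0))"
        using hom_equiv[OF p repG(1)[OF that] m0(1)] m0(2) by simp
      also have "\<dots> = f (perm_act G E act (rep C) (dlt w0))"
        using hom_equiv[OF f repG(1)[OF that] PM_dlt[OF w0]] by simp
      also have "\<dots> = f (dlt w0)" using A.perm_act_dlt[OF repG(1)[OF that] w0] repG(2)[OF that] by simp
      finally show ?thesis .
    qed
    then show ?thesis by (intro ext sum.cong) auto
  qed
  also have "\<dots> = f (dlt w0)" using N0 unfolding N_def by auto
  finally have pm: "p m = f (dlt w0)" .
  have "perm_act G L actL k m = m" if k: "k \<in> ?K" for k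
  proof -
    have kG: "k \<in> carrier G" using k unfolding stabilizer_def by auto
    have "perm_act G L actL k m = (\<lambda>v. \<Sum>C\<in>I. (1/N) * perm_act G L actL k (perm_act G L actL (rep C) m0) v)"
      unfolding m_def by (rule perm_act_sum)
    also have "\<dots> = (\<lambda>v. (1/N) * (\<Sum>C\<in>I. perm_act G L actL (k \<otimes> rep C) m0 v))"
      using B.perm_act_mult[OF kG repG(1)] by (auto simp: sum_distrib_left intro!: ext sum.cong)
    also have "\<dots> = (\<lambda>v. (1/N) * (\<Sum>C\<in>I. perm_act G L actL (rep C) m0 v))"
      using inv k by metis
    also have "\<dots> = m" unfolding m_def by (simp add: sum_distrib_left)
    finally show ?thesis .
  qed
  then show ?thesis using mPM pm by blast
qed

lemma lift:
  fixes G :: "('g, 'm) monoid_scheme" (structure)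
  assumes tg: "topological_group G T"
    and psO: "proper_G_set G T E act" and finO: "finite (orbits G E act)" and psL: "proper_G_set G T L actL"
    and p: "perm_hom G L actL L2 act2 p" and f: "perm_hom G E act L2 act2 f"
    and img: "\<forall>x\<in>PM E. f x \<in> p ` PM L"
  shows "\<exists>\<alpha>. perm_hom G E act L actL \<alpha> \<and> (\<forall>x\<in>PM E. p (\<alpha> x) = f x)"
proof -
  interpret A: group_action G E act using psO unfolding proper_G_set_def by auto
  interpret B: group_action G L actL using psL unfolding proper_G_set_def by auto
  interpret group G by (rule A.grp)
  define r where "r w = (SOME v. v \<in> orbit G act w)" for w
  have r: "r w \<in> orbit G act w" if "w \<in> E" for w
    unfolding r_def using A.orbit_refl[OF that] by (rule someI)
  have rE: "r w \<in> E" if "w \<in> E" for w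
    using r[OF that] that unfolding orbit_def by (auto intro: A.act_closed)
  have r_act: "r (act h w) = r w" if "h \<in> carrier G" "w \<in> E" for h w
    unfolding r_def using A.orbit_act[OF that] by simp
  define gg where "gg w = (SOME g. g \<in> carrier G \<and> act g (r w) = w)" for w
  have gg: "gg w \<in> carrier G \<and> act (gg w) (r w) = w" if "w \<in> E" for w
  proof -
    have "w \<in> orbit G act (r w)" using A.orbit_sym[OF that rE[OF that] r[OF that]] .
    then have "\<exists>g. g \<in> carrier G \<and> act g (r w) = w" unfolding orbit_def by auto
    then show ?thesis unfolding gg_def by (rule someI_ex)
  qed
  define M where "M w0 = (SOME m. m \<in> PM L \<and> p m = f (dlt w0) \<and> (\<forall>k\<in>stabilizer G act w0. perm_act G L actL k m = m))" for w0
  have M: "M w0 \<in> PM L \<and> p (M w0) = f (dlt w0) \<and> (\<forall>k\<in>stabilizer G act w0. perm_act G L actL k (M w0) = M w0)"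
    if "w0 \<in> E" for w0
    unfolding M_def using exists_inv_lift[OF tg psO psL p f img that] by (rule someI_ex)
  define E0 where "E0 w = perm_act G L actL (gg w) (M (r w))" for w
  have E0PM: "E0 w \<in> PM L" if "w \<in> E" for w
    unfolding E0_def using gg[OF that] M[OF rE[OF that]] by (auto intro: B.PM_perm_act)
  have E0eq: "E0 (act h w) = perm_act G L actL h (E0 w)" if h: "h \<in> carrier G" and w: "w \<in> E" for h w
  proof -
    let ?w' = "act h w" and ?\<rho> = "r w"
    have w': "?w' \<in> E" using A.act_closed h w by auto
    have rr: "r ?w' = ?\<rho>" using r_act h w by auto
    have g1: "gg w \<in> carrier G" "act (gg w) ?\<rho> = w" using gg[OF w] by auto
    have g2: "gg ?w' \<in> carrier G" "act (gg ?w') ?\<rho> = ?w'" using gg[OF w'] rr by auto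
    have \<rho>E: "?\<rho> \<in> E" using rE[OF w] .
    define k where "k = inv (h \<otimes> gg w) \<otimes> gg ?w'"
    have kG: "k \<in> carrier G" unfolding k_def using h g1 g2 by auto
    have "act k ?\<rho> = act (inv (h \<otimes> gg w)) (act (gg ?w') ?\<rho>)"
      unfolding k_def using A.composition_rule h g1 g2 \<rho>E by auto
    also have "\<dots> = act (inv (h \<otimes> gg w)) (act (h \<otimes> gg w) ?\<rho>)"
      using g2 g1 A.composition_rule h \<rho>E by auto
    also have "\<dots> = ?\<rho>" using A.orbit_sym_aux h g1 \<rho>E by auto
    finally have kst: "k \<in> stabilizer G act ?\<rho>" using kG unfolding stabilizer_def by auto
    have gk: "gg ?w' = (h \<otimes> gg w) \<otimes> k" unfolding k_def using h g1 g2
      by (simp add: m_assoc[symmetric])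
    have "E0 ?w' = perm_act G L actL ((h \<otimes> gg w) \<otimes> k) (M ?\<rho>)" unfolding E0_def rr gk ..
    also have "\<dots> = perm_act G L actL (h \<otimes> gg w) (perm_act G L actL k (M ?\<rho>))"
      using B.perm_act_mult h g1 kG by auto
    also have "\<dots> = perm_act G L actL (h \<otimes> gg w) (M ?\<rho>)" using M[OF \<rho>E] kst by auto
    also have "\<dots> = perm_act G L actL h (E0 w)" unfolding E0_def using B.perm_act_mult h g1 by auto
    finally show ?thesis .
  qed
  have pE0: "p (E0 w) = f (dlt w)" if w: "w \<in> E" for w
  proof -
    have \<rho>E: "r w \<in> E" using rE[OF w] .
    have "p (E0 w) = perm_act G L2 act2 (gg w) (p (M (r w)))"
      unfolding E0_def using hom_equiv[OF p] gg[OF w] M[OF \<rho>E] by auto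
    also have "\<dots> = perm_act G L2 act2 (gg w) (f (dlt (r w)))" using M[OF \<rho>E] by simp
    also have "\<dots> = f (perm_act G E act (gg w) (dlt (r w)))" using hom_equiv[OF f] gg[OF w] PM_dlt[OF \<rho>E] by auto
    also have "\<dots> = f (dlt w)" using A.perm_act_dlt gg[OF w] \<rho>E by auto
    finally show ?thesis .
  qed
  define \<alpha> where "\<alpha> x = (\<lambda>v. \<Sum>w\<in>{w. x w \<noteq> 0}. x w * E0 w v)" for x
  have \<alpha>S: "\<alpha> x = (\<lambda>v. \<Sum>w\<in>S. x w * E0 w v)" if "finite S" "{w. x w \<noteq> 0} \<subseteq> S" for x S
    unfolding \<alpha>_def using that by (rule sum_superset)
  have \<alpha>PM: "\<alpha> x \<in> PM L" if x: "x \<in> PM E" for x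
    unfolding \<alpha>_def using x E0PM unfolding PM_iff by (intro PM_sum[unfolded PM_iff]) auto
  have hom: "perm_hom G E act L actL \<alpha>"
    unfolding perm_hom_def
  proof (intro conjI ballI allI)
    fix x assume "x \<in> PM E" then show "\<alpha> x \<in> PM L" by (rule \<alpha>PM)
  next
    fix x y assume x: "x \<in> PM E" and y: "y \<in> PM E"
    let ?S = "{w. x w \<noteq> 0} \<union> {w. y w \<noteq> 0}"
    have fin: "finite ?S" using x y unfolding PM_iff by auto
    have "{w. x w + y w \<noteq> 0} \<subseteq> ?S" by auto
    show "\<alpha> (\<lambda>w. x w + y w) = (\<lambda>w. \<alpha> x w + \<alpha> y w)"
      using \<alpha>S[OF fin, of "\<lambda>w. x w + y w"] \<alpha>S[OF fin, of x] \<alpha>S[OF fin, of y]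
        \<open>{w. x w + y w \<noteq> 0} \<subseteq> ?S\<close>
      by (auto simp: distrib_right sum.distrib)
  next
    fix c x assume x: "x \<in> PM E"
    let ?S = "{w. x w \<noteq> 0}"
    have fin: "finite ?S" using x unfolding PM_iff by auto
    show "\<alpha> (\<lambda>w. c * x w) = (\<lambda>w. c * \<alpha> x w)"
      using \<alpha>S[OF fin, of "\<lambda>w. c * x w"] \<alpha>S[OF fin, of x]
      by (auto simp: sum_distrib_left mult.assoc)
  next
    fix h x assume h: "h \<in> carrier G" and x: "x \<in> PM E"
    let ?S = "{w. x w \<noteq> 0}"
    have fin: "finite ?S" and SE: "?S \<subseteq> E" using x unfolding PM_iff by auto
    have sub: "{w. perm_act G E act h x w \<noteq> 0} \<subseteq> act h ` ?S"
      using A.supp_perm_act[OF h, of x] SE by auto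
    have "\<alpha> (perm_act G E act h x) = (\<lambda>v. \<Sum>w\<in>act h ` ?S. perm_act G E act h x w * E0 w v)"
      using \<alpha>S[OF finite_imageI[OF fin] sub] .
    also have "\<dots> = (\<lambda>v. \<Sum>w\<in>?S. perm_act G E act h x (act h w) * E0 (act h w) v)"
      using inj_on_subset[OF A.inj_prop[OF h] SE] by (simp add: sum.reindex)
    also have "\<dots> = (\<lambda>v. \<Sum>w\<in>?S. x w * perm_act G L actL h (E0 w) v)"
      using SE A.perm_act_at[OF h] E0eq[OF h] by (intro ext sum.cong) auto
    also have "\<dots> = perm_act G L actL h (\<alpha> x)"
      unfolding \<alpha>_def by (rule perm_act_sum[symmetric])
    finally show "\<alpha> (perm_act G E act h x) = perm_act G L actL h (\<alpha> x)" .
  qed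
  have "p (\<alpha> x) = f x" if x: "x \<in> PM E" for x
  proof -
    let ?S = "{w. x w \<noteq> 0}"
    have fin: "finite ?S" and SE: "?S \<subseteq> E" using x unfolding PM_iff by auto
    have "p (\<alpha> x) = (\<lambda>u. \<Sum>w\<in>?S. x w * p (E0 w) u)"
      unfolding \<alpha>_def using fin SE E0PM by (intro hom_sum[OF p]) auto
    also have "\<dots> = (\<lambda>u. \<Sum>w\<in>?S. x w * f (dlt w) u)"
      using SE pE0 by (intro ext sum.cong) auto
    also have "\<dots> = f (\<lambda>v. \<Sum>w\<in>?S. x w * dlt w v)"
      using fin SE by (intro hom_sum[OF f, symmetric]) (auto intro: PM_dlt)
    also have "\<dots> = f x" using PM_decomp[OF x] by simp
    finally show ?thesis .
  qed
  then show ?thesis using hom by blast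
qed

lemma aug_to_hom:
  assumes "aug_hom G E act eps"
  shows "perm_hom G E act (UNIV :: unit set) (\<lambda>g u. u) (\<lambda>x u. eps x)"
  using assms unfolding aug_hom_def perm_hom_def perm_act_def PM_iff by auto

lemma aug_diff:
  assumes "aug_hom G E act eps" "x \<in> PM E" "y \<in> PM E"
  shows "eps (\<lambda>w. x w - y w) = eps x - eps y"
proof -
  have "(\<lambda>u::unit. eps (\<lambda>w. x w - y w)) = (\<lambda>u. eps x - eps y)"
    using hom_diff[OF aug_to_hom[OF assms(1)] assms(2,3)] by simp
  then have "(\<lambda>u::unit. eps (\<lambda>w. x w - y w)) () = (\<lambda>u::unit. eps x - eps y) ()" by (rule arg_cong)
  then show ?thesis by simp
qed

lemma aug_zero:
  assumes "aug_hom G E act eps"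
  shows "eps (\<lambda>w. 0) = 0"
proof -
  have "(\<lambda>u::unit. eps (\<lambda>w. 0)) = (\<lambda>u. 0)"
    using hom_zero[OF aug_to_hom[OF assms(1)]] by simp
  then have "(\<lambda>u::unit. eps (\<lambda>w. 0)) () = (\<lambda>u::unit. 0) ()" by (rule arg_cong)
  then show ?thesis by simp
qed

context
  fixes G :: "('g, 'm) monoid_scheme" and T n Om act d eps
  assumes P: "partial_ppr G T n Om act d eps"
begin

lemma ppr_hom: "i \<in> {1..Suc n} \<Longrightarrow> perm_hom G (Om i) (act i) (Om (i - 1)) (act (i - 1)) (d i)"
  using P unfolding partial_ppr_def by auto

lemma ppr_hom': "i \<le> n \<Longrightarrow> perm_hom G (Om (Suc i)) (act (Suc i)) (Om i) (act i) (d (Suc i))"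
  using ppr_hom[of "Suc i"] by auto

lemma ppr_proper: "i \<le> Suc n \<Longrightarrow> proper_G_set G T (Om i) (act i)"
  using P unfolding partial_ppr_def by auto

lemma ppr_fin: "i \<le> Suc n \<Longrightarrow> finite (orbits G (Om i) (act i))"
  using P unfolding partial_ppr_def by auto

lemma ppr_aug: "aug_hom G (Om 0) (act 0) eps"
  using P unfolding partial_ppr_def by auto

lemma ppr_surj: "\<exists>y\<in>PM (Om 0). eps y = c"
proof -
  have "c \<in> eps ` PM (Om 0)" using P unfolding partial_ppr_def by auto
  then show ?thesis by auto
qed

lemma ppr_ker0: "{x\<in>PM (Om 0). eps x = 0} = d 1 ` PM (Om 1)"
  using P unfolding partial_ppr_def by auto

lemma ppr_ker: "i \<in> {1..n} \<Longrightarrow> {x\<in>PM (Om i). d i x = (\<lambda>_. 0)} = d (Suc i) ` PM (Om (Suc i))"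
  using P unfolding partial_ppr_def by auto

lemma ppr_ed: "x \<in> PM (Om 1) \<Longrightarrow> eps (d 1 x) = 0"
  using ppr_ker0 by blast

lemma ppr_dd: "i \<in> {1..n} \<Longrightarrow> x \<in> PM (Om (Suc i)) \<Longrightarrow> d i (d (Suc i) x) = (\<lambda>_. 0)"
  using ppr_ker by blast

end


lemma compare:
  assumes tg: "topological_group G T"
    and O: "partial_ppr G T n Om actO d epsO" and L: "partial_ppr G T n La actL delta epsL"
  shows "\<exists>\<alpha>. (\<forall>i\<le>Suc n. perm_hom G (Om i) (actO i) (La i) (actL i) (\<alpha> i)) \<and>
           (\<forall>x\<in>PM (Om 0). epsL (\<alpha> 0 x) = epsO x) \<and>
           (\<forall>i\<in>{1..Suc n}. \<forall>x\<in>PM (Om i). delta i (\<alpha> i x) = \<alpha> (i - 1) (d i x))"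
proof -
  have "\<forall>k\<le>Suc n. \<exists>\<alpha>. (\<forall>i\<le>k. perm_hom G (Om i) (actO i) (La i) (actL i) (\<alpha> i)) \<and>
           (\<forall>x\<in>PM (Om 0). epsL (\<alpha> 0 x) = epsO x) \<and>
           (\<forall>i\<in>{1..k}. \<forall>x\<in>PM (Om i). delta i (\<alpha> i x) = \<alpha> (i - 1) (d i x))"
  proof (intro allI impI)
    fix k assume "k \<le> Suc n"
    then show "\<exists>\<alpha>. (\<forall>i\<le>k. perm_hom G (Om i) (actO i) (La i) (actL i) (\<alpha> i)) \<and>
           (\<forall>x\<in>PM (Om 0). epsL (\<alpha> 0 x) = epsO x) \<and>
           (\<forall>i\<in>{1..k}. \<forall>x\<in>PM (Om i). delta i (\<alpha> i x) = \<alpha> (i - 1) (d i x))"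
    proof (induction k)
      case 0
      have img: "\<forall>x\<in>PM (Om 0). (\<lambda>u::unit. epsO x) \<in> (\<lambda>x u. epsL x) ` PM (La 0)"
      proof
        fix x assume "x \<in> PM (Om 0)"
        obtain y where y: "y \<in> PM (La 0)" "epsL y = epsO x" using ppr_surj[OF L, of "epsO x"] by blast
        show "(\<lambda>u::unit. epsO x) \<in> (\<lambda>x u. epsL x) ` PM (La 0)" by (rule image_eqI[of _ _ y]) (use y in auto)
      qed
      obtain \<alpha>0 where a0: "perm_hom G (Om 0) (actO 0) (La 0) (actL 0) \<alpha>0"
        "\<forall>x\<in>PM (Om 0). (\<lambda>u::unit. epsL (\<alpha>0 x)) = (\<lambda>u. epsO x)"
        using lift[OF tg ppr_proper[OF O] ppr_fin[OF O] ppr_proper[OF L] aug_to_hom[OF ppr_aug[OF L]]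
            aug_to_hom[OF ppr_aug[OF O]] img] by auto
      have "\<forall>x\<in>PM (Om 0). epsL (\<alpha>0 x) = epsO x" using a0(2) by metis
      then show ?case using a0(1) by (intro exI[of _ "\<lambda>_. \<alpha>0"]) auto
    next
      case (Suc k)
      then have kn: "k \<le> n" by simp
      have "k \<le> Suc n" using kn by simp
      from Suc.IH[OF this] obtain \<alpha> where a: "\<forall>i\<le>k. perm_hom G (Om i) (actO i) (La i) (actL i) (\<alpha> i)"
           "\<forall>x\<in>PM (Om 0). epsL (\<alpha> 0 x) = epsO x"
           "\<forall>i\<in>{1..k}. \<forall>x\<in>PM (Om i). delta i (\<alpha> i x) = \<alpha> (i - 1) (d i x)"
        by blast
      have fh: "perm_hom G (Om (Suc k)) (actO (Suc k)) (La k) (actL k) (\<lambda>x. \<alpha> k (d (Suc k) x))"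
        using hom_comp[OF ppr_hom'[OF O kn]] a(1) by auto
      have img: "\<forall>x\<in>PM (Om (Suc k)). \<alpha> k (d (Suc k) x) \<in> delta (Suc k) ` PM (La (Suc k))"
      proof
        fix x assume x: "x \<in> PM (Om (Suc k))"
        have dx: "d (Suc k) x \<in> PM (Om k)" using hom_closed[OF ppr_hom'[OF O kn] x] .
        have ak: "perm_hom G (Om k) (actO k) (La k) (actL k) (\<alpha> k)" using a(1) by simp
        have inPM: "\<alpha> k (d (Suc k) x) \<in> PM (La k)" using hom_closed[OF ak dx] .
        show "\<alpha> k (d (Suc k) x) \<in> delta (Suc k) ` PM (La (Suc k))"
        proof (cases "k = 0")
          case True
          have "epsL (\<alpha> 0 (d 1 x)) = 0" using a(2) dx ppr_ed[OF O] x True by auto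
          then show ?thesis using ppr_ker0[OF L] inPM True by auto
        next
          case False
          then have k1: "k \<in> {1..n}" using kn by auto
          have ak1: "perm_hom G (Om (k - 1)) (actO (k - 1)) (La (k - 1)) (actL (k - 1)) (\<alpha> (k - 1))" using a(1) by simp
          have "delta k (\<alpha> k (d (Suc k) x)) = \<alpha> (k - 1) (d k (d (Suc k) x))"
            using a(3) k1 dx by auto
          also have "\<dots> = (\<lambda>_. 0)" using ppr_dd[OF O k1 x] hom_zero[OF ak1] by simp
          finally show ?thesis using ppr_ker[OF L k1] inPM by blast
        qed
      qed
      obtain \<beta> where b: "perm_hom G (Om (Suc k)) (actO (Suc k)) (La (Suc k)) (actL (Suc k)) \<beta>"
        "\<forall>x\<in>PM (Om (Suc k)). delta (Suc k) (\<beta> x) = \<alpha> k (d (Suc k) x)"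
        using lift[OF tg ppr_proper[OF O] ppr_fin[OF O] ppr_proper[OF L] ppr_hom'[OF L kn] fh img] Suc.prems
        by auto
      show ?case
      proof (intro exI[of _ "\<alpha>(Suc k := \<beta>)"] conjI)
        show "\<forall>i\<le>Suc k. perm_hom G (Om i) (actO i) (La i) (actL i) ((\<alpha>(Suc k := \<beta>)) i)"
          using a(1) b(1) by (auto simp: le_Suc_eq)
        show "\<forall>x\<in>PM (Om 0). epsL ((\<alpha>(Suc k := \<beta>)) 0 x) = epsO x" using a(2) by auto
        show "\<forall>i\<in>{1..Suc k}. \<forall>x\<in>PM (Om i). delta i ((\<alpha>(Suc k := \<beta>)) i x) = (\<alpha>(Suc k := \<beta>)) (i - 1) (d i x)"
          using a(3) b(2) by (auto simp: le_Suc_eq)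
      qed
    qed
  qed
  then show ?thesis by blast
qed


lemma homotopy:
  assumes tg: "topological_group G T"
    and O: "partial_ppr G T n Om act d eps"
    and gh: "\<forall>i\<le>n. perm_hom G (Om i) (act i) (Om i) (act i) (\<gamma> i)"
    and ge: "\<forall>x\<in>PM (Om 0). eps (\<gamma> 0 x) = eps x"
    and gc: "\<forall>i\<in>{1..n}. \<forall>x\<in>PM (Om i). d i (\<gamma> i x) = \<gamma> (i - 1) (d i x)"
  shows "\<exists>h. (\<forall>i\<le>n. perm_hom G (Om i) (act i) (Om (Suc i)) (act (Suc i)) (h i)) \<and>
           (\<forall>x\<in>PM (Om 0). d 1 (h 0 x) = (\<lambda>v. x v - \<gamma> 0 x v)) \<and>
           (\<forall>i\<in>{1..n}. \<forall>x\<in>PM (Om i). d (Suc i) (h i x) = (\<lambda>v. x v - \<gamma> i x v - h (i - 1) (d i x) v))"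
proof -
  have "\<forall>k\<le>n. \<exists>h. (\<forall>i\<le>k. perm_hom G (Om i) (act i) (Om (Suc i)) (act (Suc i)) (h i)) \<and>
           (\<forall>x\<in>PM (Om 0). d 1 (h 0 x) = (\<lambda>v. x v - \<gamma> 0 x v)) \<and>
           (\<forall>i\<in>{1..k}. \<forall>x\<in>PM (Om i). d (Suc i) (h i x) = (\<lambda>v. x v - \<gamma> i x v - h (i - 1) (d i x) v))"
  proof (intro allI impI)
    fix k assume "k \<le> n"
    then show "\<exists>h. (\<forall>i\<le>k. perm_hom G (Om i) (act i) (Om (Suc i)) (act (Suc i)) (h i)) \<and>
           (\<forall>x\<in>PM (Om 0). d 1 (h 0 x) = (\<lambda>v. x v - \<gamma> 0 x v)) \<and>
           (\<forall>i\<in>{1..k}. \<forall>x\<in>PM (Om i). d (Suc i) (h i x) = (\<lambda>v. x v - \<gamma> i x v - h (i - 1) (d i x) v))"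
    proof (induction k)
      case 0
      have g0: "perm_hom G (Om 0) (act 0) (Om 0) (act 0) (\<gamma> 0)" using gh by simp
      have fh: "perm_hom G (Om 0) (act 0) (Om 0) (act 0) (\<lambda>x v. x v - \<gamma> 0 x v)"
        using hom_minus[OF hom_id g0] .
      have img: "\<forall>x\<in>PM (Om 0). (\<lambda>v. x v - \<gamma> 0 x v) \<in> d 1 ` PM (Om 1)"
      proof
        fix x assume x: "x \<in> PM (Om 0)"
        have "eps (\<lambda>v. x v - \<gamma> 0 x v) = 0"
          using aug_diff[OF ppr_aug[OF O] x hom_closed[OF g0 x]] ge x by simp
        moreover have "(\<lambda>v. x v - \<gamma> 0 x v) \<in> PM (Om 0)" using hom_closed[OF fh x] .
        ultimately show "(\<lambda>v. x v - \<gamma> 0 x v) \<in> d 1 ` PM (Om 1)" using ppr_ker0[OF O] by blast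
      qed
      obtain h0 where h0: "perm_hom G (Om 0) (act 0) (Om 1) (act 1) h0"
        "\<forall>x\<in>PM (Om 0). d 1 (h0 x) = (\<lambda>v. x v - \<gamma> 0 x v)"
      proof -
        have d1: "perm_hom G (Om 1) (act 1) (Om 0) (act 0) (d 1)" using ppr_hom[OF O, of 1] by simp
        have p0: "proper_G_set G T (Om 0) (act 0)" "finite (orbits G (Om 0) (act 0))" "proper_G_set G T (Om 1) (act 1)"
          using ppr_proper[OF O, of 0] ppr_fin[OF O, of 0] ppr_proper[OF O, of 1] by auto
        show ?thesis using lift[OF tg p0 d1 fh img] that by blast
      qed
      show ?case using h0 by (intro exI[of _ "\<lambda>_. h0"]) auto
    next
      case (Suc k)
      then have kn: "k < n" by simp
      have "k \<le> n" using kn by simp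
      from Suc.IH[OF this] obtain h where a: "\<forall>i\<le>k. perm_hom G (Om i) (act i) (Om (Suc i)) (act (Suc i)) (h i)"
           "\<forall>x\<in>PM (Om 0). d 1 (h 0 x) = (\<lambda>v. x v - \<gamma> 0 x v)"
           "\<forall>i\<in>{1..k}. \<forall>x\<in>PM (Om i). d (Suc i) (h i x) = (\<lambda>v. x v - \<gamma> i x v - h (i - 1) (d i x) v)"
        by blast
      have hk: "perm_hom G (Om k) (act k) (Om (Suc k)) (act (Suc k)) (h k)" using a(1) by simp
      have dk: "perm_hom G (Om (Suc k)) (act (Suc k)) (Om k) (act k) (d (Suc k))" using ppr_hom'[OF O] kn by simp
      have gk: "perm_hom G (Om (Suc k)) (act (Suc k)) (Om (Suc k)) (act (Suc k)) (\<gamma> (Suc k))" using gh kn by simp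
      have gk': "perm_hom G (Om k) (act k) (Om k) (act k) (\<gamma> k)" using gh kn by simp
      have fh: "perm_hom G (Om (Suc k)) (act (Suc k)) (Om (Suc k)) (act (Suc k))
                 (\<lambda>x v. x v - \<gamma> (Suc k) x v - h k (d (Suc k) x) v)"
        using hom_minus[OF hom_minus[OF hom_id gk] hom_comp[OF dk hk]] .
      have k1: "Suc k \<in> {1..n}" using kn by simp
      have img: "\<forall>x\<in>PM (Om (Suc k)). (\<lambda>v. x v - \<gamma> (Suc k) x v - h k (d (Suc k) x) v) \<in> d (Suc (Suc k)) ` PM (Om (Suc (Suc k)))"
      proof
        fix x assume x: "x \<in> PM (Om (Suc k))"
        let ?y = "d (Suc k) x"
        have y: "?y \<in> PM (Om k)" using hom_closed[OF dk x] .
        have gx: "\<gamma> (Suc k) x \<in> PM (Om (Suc k))" using hom_closed[OF gk x] .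
        have hy: "h k ?y \<in> PM (Om (Suc k))" using hom_closed[OF hk y] .
        have gy: "\<gamma> k ?y \<in> PM (Om k)" using hom_closed[OF gk' y] .
        have dg: "d (Suc k) (\<gamma> (Suc k) x) = \<gamma> k ?y" using gc k1 x by auto
        have dh: "d (Suc k) (h k ?y) = (\<lambda>v. ?y v - \<gamma> k ?y v)"
        proof (cases "k = 0")
          case True then show ?thesis using a(2) y by simp
        next
          case False
          then have kk: "k \<in> {1..n}" using kn by auto
          have hk1: "perm_hom G (Om (k - 1)) (act (k - 1)) (Om (Suc (k - 1))) (act (Suc (k - 1))) (h (k - 1))"
            using a(1) by simp
          have "d k ?y = (\<lambda>_. 0)" using ppr_dd[OF O kk x] .
          then have "h (k - 1) (d k ?y) = (\<lambda>_. 0)" using hom_zero[OF hk1] by simp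
          then show ?thesis using a(3) False y by auto
        qed
        have "d (Suc k) (\<lambda>v. x v - \<gamma> (Suc k) x v - h k ?y v) = (\<lambda>v. ?y v - \<gamma> k ?y v - d (Suc k) (h k ?y) v)"
          using hom_diff[OF dk PM_diff[OF x gx] hy] hom_diff[OF dk x gx] dg by simp
        also have "\<dots> = (\<lambda>_. 0)" using dh by simp
        finally have "d (Suc k) (\<lambda>v. x v - \<gamma> (Suc k) x v - h k ?y v) = (\<lambda>_. 0)" .
        moreover have "(\<lambda>v. x v - \<gamma> (Suc k) x v - h k ?y v) \<in> PM (Om (Suc k))" using hom_closed[OF fh x] .
        ultimately show "(\<lambda>v. x v - \<gamma> (Suc k) x v - h k ?y v) \<in> d (Suc (Suc k)) ` PM (Om (Suc (Suc k)))"
          using ppr_ker[OF O k1] by blast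
      qed
      have sk: "Suc k \<le> n" using kn by simp
      obtain \<beta> where b: "perm_hom G (Om (Suc k)) (act (Suc k)) (Om (Suc (Suc k))) (act (Suc (Suc k))) \<beta>"
        "\<forall>x\<in>PM (Om (Suc k)). d (Suc (Suc k)) (\<beta> x) = (\<lambda>v. x v - \<gamma> (Suc k) x v - h k (d (Suc k) x) v)"
        using lift[OF tg ppr_proper[OF O] ppr_fin[OF O] ppr_proper[OF O] ppr_hom'[OF O sk] fh img] kn
        by auto
      show ?case
      proof (intro exI[of _ "h(Suc k := \<beta>)"] conjI)
        show "\<forall>i\<le>Suc k. perm_hom G (Om i) (act i) (Om (Suc i)) (act (Suc i)) ((h(Suc k := \<beta>)) i)"
          using a(1) b(1) by (auto simp: le_Suc_eq)
        show "\<forall>x\<in>PM (Om 0). d 1 ((h(Suc k := \<beta>)) 0 x) = (\<lambda>v. x v - \<gamma> 0 x v)" using a(2) by auto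
        show "\<forall>i\<in>{1..Suc k}. \<forall>x\<in>PM (Om i). d (Suc i) ((h(Suc k := \<beta>)) i x) =
                (\<lambda>v. x v - \<gamma> i x v - (h(Suc k := \<beta>)) (i - 1) (d i x) v)"
          using a(3) b(2) by (auto simp: le_Suc_eq)
      qed
    qed
  qed
  then show ?thesis by blast
qed


lemma bdd_l1: "bdd_below (l1_norm ` A)"
  by (rule bdd_belowI[of _ 0]) (auto simp: l1_nonneg)

lemma direction:
  assumes tg: "topological_group G T"
    and O: "partial_ppr G T n Om actO d epsO" and L: "partial_ppr G T n La actL delta epsL"
    and wL: "weak_linear_isoperimetric n La delta epsL"
  shows "weak_linear_isoperimetric n Om d epsO"
proof -
  obtain \<alpha> where a: "\<forall>i\<le>Suc n. perm_hom G (Om i) (actO i) (La i) (actL i) (\<alpha> i)"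
           "\<forall>x\<in>PM (Om 0). epsL (\<alpha> 0 x) = epsO x"
           "\<forall>i\<in>{1..Suc n}. \<forall>x\<in>PM (Om i). delta i (\<alpha> i x) = \<alpha> (i - 1) (d i x)"
    using compare[OF tg O L] by blast
  obtain \<beta> where b: "\<forall>i\<le>Suc n. perm_hom G (La i) (actL i) (Om i) (actO i) (\<beta> i)"
           "\<forall>x\<in>PM (La 0). epsO (\<beta> 0 x) = epsL x"
           "\<forall>i\<in>{1..Suc n}. \<forall>x\<in>PM (La i). d i (\<beta> i x) = \<beta> (i - 1) (delta i x)"
    using compare[OF tg L O] by blast
  define \<gamma> where "\<gamma> i x = \<beta> i (\<alpha> i x)" for i x
  have gh: "\<forall>i\<le>n. perm_hom G (Om i) (actO i) (Om i) (actO i) (\<gamma> i)"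
  proof (intro allI impI)
    fix i assume i: "i \<le> n"
    have "perm_hom G (Om i) (actO i) (La i) (actL i) (\<alpha> i)" "perm_hom G (La i) (actL i) (Om i) (actO i) (\<beta> i)"
      using a(1) b(1) i by auto
    then show "perm_hom G (Om i) (actO i) (Om i) (actO i) (\<gamma> i)" unfolding \<gamma>_def by (rule hom_comp)
  qed
  have ge: "\<forall>x\<in>PM (Om 0). epsO (\<gamma> 0 x) = epsO x"
    unfolding \<gamma>_def using a b hom_closed by fastforce
  have gc: "\<forall>i\<in>{1..n}. \<forall>x\<in>PM (Om i). d i (\<gamma> i x) = \<gamma> (i - 1) (d i x)"
  proof (intro ballI)
    fix i x assume i: "i \<in> {1..n}" and x: "x \<in> PM (Om i)"
    have ai: "perm_hom G (Om i) (actO i) (La i) (actL i) (\<alpha> i)" using a(1) i by auto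
    have "d i (\<gamma> i x) = \<beta> (i - 1) (delta i (\<alpha> i x))"
      unfolding \<gamma>_def using b(3) i hom_closed[OF ai x] by auto
    also have "\<dots> = \<gamma> (i - 1) (d i x)" unfolding \<gamma>_def using a(3) i x by auto
    finally show "d i (\<gamma> i x) = \<gamma> (i - 1) (d i x)" .
  qed
  obtain h where h: "\<forall>i\<le>n. perm_hom G (Om i) (actO i) (Om (Suc i)) (actO (Suc i)) (h i)"
           "\<forall>x\<in>PM (Om 0). d 1 (h 0 x) = (\<lambda>v. x v - \<gamma> 0 x v)"
           "\<forall>i\<in>{1..n}. \<forall>x\<in>PM (Om i). d (Suc i) (h i x) = (\<lambda>v. x v - \<gamma> i x v - h (i - 1) (d i x) v)"
    using homotopy[OF tg O gh ge gc] by blast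
  have gaO: "group_action G (Om i) (actO i)" if "i \<le> Suc n" for i
    using ppr_proper[OF O that] unfolding proper_G_set_def by auto
  have gaL: "group_action G (La i) (actL i)" if "i \<le> Suc n" for i
    using ppr_proper[OF L that] unfolding proper_G_set_def by auto
  have an: "perm_hom G (Om n) (actO n) (La n) (actL n) (\<alpha> n)" using a(1) by simp
  have bn: "perm_hom G (La (Suc n)) (actL (Suc n)) (Om (Suc n)) (actO (Suc n)) (\<beta> (Suc n))" using b(1) by simp
  have hn: "perm_hom G (Om n) (actO n) (Om (Suc n)) (actO (Suc n)) (h n)" using h(1) by simp
  have dn: "perm_hom G (Om (Suc n)) (actO (Suc n)) (Om n) (actO n) (d (Suc n))" using ppr_hom'[OF O] by simp
  obtain Ba where Ba: "Ba \<ge> 0" "\<forall>x\<in>PM (Om n). l1_norm (\<alpha> n x) \<le> Ba * l1_norm x"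
    using hom_bound[OF gaO ppr_fin[OF O] gaL an] by auto
  obtain Bb where Bb: "Bb \<ge> 0" "\<forall>x\<in>PM (La (Suc n)). l1_norm (\<beta> (Suc n) x) \<le> Bb * l1_norm x"
    using hom_bound[OF gaL ppr_fin[OF L] gaO bn] by auto
  obtain Bh where Bh: "Bh \<ge> 0" "\<forall>x\<in>PM (Om n). l1_norm (h n x) \<le> Bh * l1_norm x"
    using hom_bound[OF gaO ppr_fin[OF O] gaO hn] by auto
  obtain C where C: "C > 0" "\<forall>x\<in>ppr_kernel n La delta epsL.
        (INF y\<in>{y\<in>PM (La (Suc n)). delta (Suc n) y = x}. l1_norm y) \<le> C * l1_norm x"
    using wL unfolding weak_linear_isoperimetric_def by blast
  define C' where "C' = Bb * C * Ba + Bh + 1"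
  have C'0: "C' > 0" unfolding C'_def using Ba Bb Bh C by (simp add: add_nonneg_pos)
  have main: "(INF y\<in>{y\<in>PM (Om (Suc n)). d (Suc n) y = x}. l1_norm y) \<le> C' * l1_norm x"
    if x: "x \<in> ppr_kernel n Om d epsO" for x
  proof -
    have xPM: "x \<in> PM (Om n)" using x unfolding ppr_kernel_def by (auto split: if_splits)
    let ?ax = "\<alpha> n x"
    have axPM: "?ax \<in> PM (La n)" using hom_closed[OF an xPM] .
    have dx0: "d n x = (\<lambda>_. 0)" if "n \<noteq> 0" using x that unfolding ppr_kernel_def by auto
    have axK: "?ax \<in> ppr_kernel n La delta epsL"
    proof (cases "n = 0")
      case True
      then have "epsO x = 0" using x unfolding ppr_kernel_def by auto
      then show ?thesis using True a(2) xPM axPM unfolding ppr_kernel_def by auto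
    next
      case False
      have an1: "perm_hom G (Om (n - 1)) (actO (n - 1)) (La (n - 1)) (actL (n - 1)) (\<alpha> (n - 1))" using a(1) by simp
      have "delta n ?ax = \<alpha> (n - 1) (d n x)" using a(3) False xPM by auto
      also have "\<dots> = (\<lambda>_. 0)" using dx0[OF False] hom_zero[OF an1] by simp
      finally show ?thesis using False axPM unfolding ppr_kernel_def by auto
    qed
    let ?SL = "{y\<in>PM (La (Suc n)). delta (Suc n) y = ?ax}"
    have SLne: "?SL \<noteq> {}"
    proof (cases "n = 0")
      case True
      then have "?ax \<in> delta 1 ` PM (La 1)" using axK ppr_ker0[OF L] unfolding ppr_kernel_def by auto
      then show ?thesis using True by auto
    next
      case False
      then have "n \<in> {1..n}" by simp
      then have "?ax \<in> delta (Suc n) ` PM (La (Suc n))" using axK ppr_ker[OF L] False unfolding ppr_kernel_def by auto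
      then show ?thesis by auto
    qed
    have infL: "(INF y\<in>?SL. l1_norm y) \<le> C * (Ba * l1_norm x)"
    proof -
      have "(INF y\<in>?SL. l1_norm y) \<le> C * l1_norm ?ax" using C(2) axK by blast
      also have "\<dots> \<le> C * (Ba * l1_norm x)" using Ba(2) xPM C(1) by (intro mult_left_mono) auto
      finally show ?thesis .
    qed
    have dh: "d (Suc n) (h n x) = (\<lambda>v. x v - \<gamma> n x v)"
    proof (cases "n = 0")
      case True then show ?thesis using h(2) xPM by simp
    next
      case False
      have hn1: "perm_hom G (Om (n - 1)) (actO (n - 1)) (Om (Suc (n - 1))) (actO (Suc (n - 1))) (h (n - 1))"
        using h(1) by simp
      have "h (n - 1) (d n x) = (\<lambda>_. 0)" using dx0[OF False] hom_zero[OF hn1] by simp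
      then show ?thesis using h(3) False xPM by auto
    qed
    let ?S = "{y\<in>PM (Om (Suc n)). d (Suc n) y = x}"
    have "(INF y\<in>?S. l1_norm y) \<le> (Bb * C * Ba + Bh) * l1_norm x + e" if e: "e > 0" for e
    proof -
      define e' where "e' = e / (Bb + 1)"
      have e': "e' > 0" unfolding e'_def using e Bb by simp
      have "(INF y\<in>?SL. l1_norm y) < (INF y\<in>?SL. l1_norm y) + e'" using e' by simp
      then obtain y' where y': "y' \<in> ?SL" "l1_norm y' < (INF y\<in>?SL. l1_norm y) + e'"
        using cINF_less_iff[OF SLne bdd_l1] by blast
      define y where "y = (\<lambda>v. \<beta> (Suc n) y' v + h n x v)"
      have by': "\<beta> (Suc n) y' \<in> PM (Om (Suc n))" using hom_closed[OF bn] y' by auto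
      have hx: "h n x \<in> PM (Om (Suc n))" using hom_closed[OF hn xPM] .
      have yPM: "y \<in> PM (Om (Suc n))" unfolding y_def using PM_add[OF by' hx] .
      have "d (Suc n) (\<beta> (Suc n) y') = \<beta> n (delta (Suc n) y')" using b(3) y' by force
      also have "\<dots> = \<gamma> n x" using y' unfolding \<gamma>_def by simp
      finally have dby: "d (Suc n) (\<beta> (Suc n) y') = \<gamma> n x" .
      have "d (Suc n) y = (\<lambda>v. \<gamma> n x v + (x v - \<gamma> n x v))"
        unfolding y_def using hom_add[OF dn by' hx] dby dh by simp
      also have "\<dots> = x" by simp
      finally have yS: "y \<in> ?S" using yPM by simp
      have "l1_norm y \<le> l1_norm (\<beta> (Suc n) y') + l1_norm (h n x)"
        unfolding y_def using by' hx by (intro l1_add_le) (auto simp: PM_iff)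
      also have "\<dots> \<le> Bb * l1_norm y' + Bh * l1_norm x"
        using Bb(2) Bh(2) y' xPM by (intro add_mono) auto
      also have "\<dots> \<le> Bb * (C * (Ba * l1_norm x) + e') + Bh * l1_norm x"
      proof -
        have "l1_norm y' \<le> C * (Ba * l1_norm x) + e'" using y'(2) infL by linarith
        from mult_left_mono[OF this Bb(1)] show ?thesis by simp
      qed
      also have "\<dots> = (Bb * C * Ba + Bh) * l1_norm x + Bb * e'" by (simp add: algebra_simps)
      also have "\<dots> \<le> (Bb * C * Ba + Bh) * l1_norm x + e"
      proof -
        have "Bb * e' = e * (Bb / (Bb + 1))" unfolding e'_def using Bb by (simp add: field_simps)
        also have "\<dots> \<le> e * 1" using e Bb by (intro mult_left_mono) auto
        finally show ?thesis by simp
      qed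
      finally have "l1_norm y \<le> (Bb * C * Ba + Bh) * l1_norm x + e" .
      moreover have "(INF y\<in>?S. l1_norm y) \<le> l1_norm y" using cINF_lower[OF bdd_l1 yS] .
      ultimately show ?thesis by linarith
    qed
    then have "(INF y\<in>?S. l1_norm y) \<le> (Bb * C * Ba + Bh) * l1_norm x" by (rule field_le_epsilon)
    also have "\<dots> \<le> C' * l1_norm x" unfolding C'_def using l1_nonneg[of x] by (simp add: mult_right_mono)
    finally show ?thesis .
  qed
  show ?thesis unfolding weak_linear_isoperimetric_def using C'0 main by blast
qed

theorem proposition4p6:
  fixes G :: "('g, 'm) monoid_scheme" and T :: "'g topology" and n :: nat
    and Om :: "nat \<Rightarrow> 'w set" and actO :: "nat \<Rightarrow> 'g \<Rightarrow> 'w \<Rightarrow> 'w"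
    and d :: "nat \<Rightarrow> ('w \<Rightarrow> rat) \<Rightarrow> ('w \<Rightarrow> rat)" and epsO :: "('w \<Rightarrow> rat) \<Rightarrow> rat"
    and La :: "nat \<Rightarrow> 'v set" and actL :: "nat \<Rightarrow> 'g \<Rightarrow> 'v \<Rightarrow> 'v"
    and delta :: "nat \<Rightarrow> ('v \<Rightarrow> rat) \<Rightarrow> ('v \<Rightarrow> rat)" and epsL :: "('v \<Rightarrow> rat) \<Rightarrow> rat"
  assumes "TDLC_group G T"
    and "partial_ppr G T n Om actO d epsO"
    and "partial_ppr G T n La actL delta epsL"
  shows "weak_linear_isoperimetric n La delta epsL \<longleftrightarrow> weak_linear_isoperimetric n Om d epsO"
proof -
  have tg: "topological_group G T" using assms(1) unfolding TDLC_group_def by auto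
  show ?thesis using direction[OF tg assms(2,3)] direction[OF tg assms(3,2)] by blast
qed

end
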